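(* For every $\theta\in[-\pi,\pi]^d\setminus\{0\}$, the spectral radius of the complex matrix $\widehat{\mu}(\theta)$ is strictly smaller than $1$.
   Context: Fix integers $d,p\ge 1$. Let $(Z_n)=(A_n,M_n)$ be a Markov-additive process on $\mathbb{Z}^d\times\{1,\dots,p\}$, i.e. a Markov chain with $\mathbb{P}_{(x,i)}((A_1,M_1)=(x',i'))=\mathbb{P}_{(0,i)}((A_1,M_1)=(x'-x,i'))$ for all $x,x',i,i'$, with jump matrix of sub-probability measures $\mu_{i,j}(x)=\mathbb{P}_{(0,i)}((A_1,M_1)=(x,j))$. It is assumed irreducible, aperiodic (for every state $(x,i)$, $\gcd\{n\ge1:\mathbb{P}_{(x,i)}(Z_n=(x,i))>0\}=1$), and with finite exponential moments ($\sum_x e^{\alpha\|x\|}\mu_{i,j}(x)<\infty$ for all $i,j$, $\alpha>0$). The Fourier transform is the $p\times p$ complex matrix $\widehat\mu(\theta)_{i,j}=\sum_{x\in\mathbb{Z}^d}e^{\mathbf{i}x\cdot\theta}\mu_{i,j}(x)$, $\theta\in\mathbb{R}^d$. *)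

theory Defs
  imports "HOL-Analysis.Analysis" "Jordan_Normal_Form.Spectral_Radius"
begin

text \<open>Markov-additive process on Z^d x {0,...,p-1} (modes indexed 0..p-1 instead of 1..p).
  Z^d is rendered as int^'d (d = CARD('d)); the jump kernel is mu i j x.\<close>

definition state_space :: "nat \<Rightarrow> ((int^'d) \<times> nat) set" where
  "state_space p = UNIV \<times> {..<p}"

definition mak_trans :: "(nat \<Rightarrow> nat \<Rightarrow> int^'d \<Rightarrow> real) \<Rightarrow> (int^'d) \<times> nat \<Rightarrow> (int^'d) \<times> nat \<Rightarrow> real" where
  "mak_trans mu s t = mu (snd s) (snd t) (fst t - fst s)"

fun mak_trans_pow :: "nat \<Rightarrow> (nat \<Rightarrow> nat \<Rightarrow> int^'d \<Rightarrow> real) \<Rightarrow> nat \<Rightarrow> (int^'d) \<times> nat \<Rightarrow> (int^'d) \<times> nat \<Rightarrow> real" where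
  "mak_trans_pow p mu 0 s t = (if s = t then 1 else 0)"
| "mak_trans_pow p mu (Suc n) s t =
     (\<Sum>\<^sub>\<infinity>u\<in>state_space p. mak_trans_pow p mu n s u * mak_trans mu u t)"

definition markov_additive :: "nat \<Rightarrow> (nat \<Rightarrow> nat \<Rightarrow> int^'d \<Rightarrow> real) \<Rightarrow> bool" where
  "markov_additive p mu \<longleftrightarrow>
     (\<forall>i<p. \<forall>j<p. \<forall>x. mu i j x \<ge> 0) \<and>
     (\<forall>i<p. ((\<lambda>(x,j). mu i j x) has_sum 1) (UNIV \<times> {..<p}))"

definition mak_irreducible :: "nat \<Rightarrow> (nat \<Rightarrow> nat \<Rightarrow> int^'d \<Rightarrow> real) \<Rightarrow> bool" where
  "mak_irreducible p mu \<longleftrightarrow>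
     (\<forall>s\<in>state_space p. \<forall>t\<in>state_space p. \<exists>n. mak_trans_pow p mu n s t > 0)"

definition mak_aperiodic :: "nat \<Rightarrow> (nat \<Rightarrow> nat \<Rightarrow> int^'d \<Rightarrow> real) \<Rightarrow> bool" where
  "mak_aperiodic p mu \<longleftrightarrow>
     (\<forall>s\<in>state_space p. Gcd {n. n \<ge> 1 \<and> mak_trans_pow p mu n s s > 0} = 1)"

definition int_vec_norm :: "int^'d \<Rightarrow> real" where
  "int_vec_norm x = norm (\<chi> k. real_of_int (x $ k))"

definition mak_exp_moments :: "nat \<Rightarrow> (nat \<Rightarrow> nat \<Rightarrow> int^'d \<Rightarrow> real) \<Rightarrow> bool" where
  "mak_exp_moments p mu \<longleftrightarrow>
     (\<forall>i<p. \<forall>j<p. \<forall>\<alpha>>0. (\<lambda>x. exp (\<alpha> * int_vec_norm x) * mu i j x) summable_on UNIV)"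

definition int_real_dot :: "int^'d \<Rightarrow> real^'d \<Rightarrow> real" where
  "int_real_dot x \<theta> = (\<Sum>k\<in>UNIV. real_of_int (x $ k) * \<theta> $ k)"

definition mu_hat :: "nat \<Rightarrow> (nat \<Rightarrow> nat \<Rightarrow> int^'d \<Rightarrow> real) \<Rightarrow> real^'d \<Rightarrow> complex mat" where
  "mu_hat p mu \<theta> = Matrix.mat p p (\<lambda>(i,j).
      \<Sum>\<^sub>\<infinity>x\<in>UNIV. cis (int_real_dot x \<theta>) * complex_of_real (mu i j x))"

end

theory Submission
  imports Defs
begin

lemma has_sum_finsum:
  fixes f :: "'i \<Rightarrow> 'a \<Rightarrow> 'b::{topological_comm_monoid_add}"
  assumes "finite I" "\<And>i. i \<in> I \<Longrightarrow> (f i has_sum s i) A"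
  shows "((\<lambda>x. \<Sum>i\<in>I. f i x) has_sum (\<Sum>i\<in>I. s i)) A"
  using assms
proof (induction I rule: finite_induct)
  case empty then show ?case by simp
next
  case (insert i I)
  have "((\<lambda>x. f i x + (\<Sum>i\<in>I. f i x)) has_sum (s i + (\<Sum>i\<in>I. s i))) A"
    by (rule has_sum_add) (use insert in auto)
  then show ?case using insert by simp
qed

lemma core:
  fixes P :: "nat \<Rightarrow> 'a \<Rightarrow> real" and E :: "'a \<Rightarrow> complex" and w :: "nat \<Rightarrow> complex"
  assumes nn: "\<And>j x. j < p \<Longrightarrow> P j x \<ge> 0"
    and tot: "((\<lambda>x. \<Sum>j<p. P j x) has_sum 1) UNIV"
    and E: "\<And>x. cmod (E x) = 1"
    and wM: "\<And>j. j < p \<Longrightarrow> cmod (w j) \<le> M"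
    and M0: "M \<ge> 0"
    and c: "c = (\<Sum>j<p. (\<Sum>\<^sub>\<infinity>x. E x * complex_of_real (P j x)) * w j)"
  shows "cmod c \<le> M" and "cmod c = M \<Longrightarrow> j < p \<Longrightarrow> P j x > 0 \<Longrightarrow> E x * w j = c"
proof -
  have sumtot: "(\<lambda>x. \<Sum>j<p. P j x) summable_on UNIV" using tot by (auto simp: summable_on_def)
  have sP: "P j summable_on UNIV" if "j < p" for j
    by (rule summable_on_comparison_test[OF sumtot]) (use that nn in \<open>auto intro!: member_le_sum\<close>)
  have sE: "((\<lambda>x. E x * complex_of_real (P j x)) has_sum (\<Sum>\<^sub>\<infinity>x. E x * complex_of_real (P j x))) UNIV"
    if "j < p" for j
  proof -
    have "Infinite_Sum.abs_summable_on (\<lambda>x. E x * complex_of_real (P j x)) UNIV"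
    proof -
      have "(\<lambda>x. norm (E x * complex_of_real (P j x))) = P j"
        using nn[OF that] E by (auto simp: norm_mult)
      then show ?thesis using sP[OF that] by simp
    qed
    then show ?thesis using summable_on_iff_abs_summable_on_complex has_sum_infsum by blast
  qed
  have hc: "((\<lambda>x. \<Sum>j<p. E x * complex_of_real (P j x) * w j) has_sum c) UNIV"
    unfolding c by (rule has_sum_finsum) (auto intro: has_sum_cmult_left sE)
  have "((\<lambda>x. cnj c * (\<Sum>j<p. E x * complex_of_real (P j x) * w j)) has_sum cnj c * c) UNIV"
    by (rule has_sum_cmult_right[OF hc])
  from has_sum_Re[OF this]
  have hr: "((\<lambda>x. \<Sum>j<p. P j x * Re (cnj c * E x * w j)) has_sum (cmod c)^2) UNIV"
  proof -
    have e1: "Re (cnj c * c) = (cmod c)^2"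
      by (metis Re_complex_of_real complex_norm_square mult.commute)
    have e2: "Re (cnj c * (\<Sum>j<p. E x * complex_of_real (P j x) * w j)) = (\<Sum>j<p. P j x * Re (cnj c * E x * w j))" for x
    proof -
      have "cnj c * (\<Sum>j<p. E x * complex_of_real (P j x) * w j) = (\<Sum>j<p. complex_of_real (P j x) * (cnj c * E x * w j))"
        by (simp add: sum_distrib_left mult_ac)
      moreover have "Re (complex_of_real r * z) = r * Re z" for r z by simp
      ultimately show ?thesis by (simp add: Re_sum)
    qed
    show "((\<lambda>x. Re (cnj c * (\<Sum>j<p. E x * complex_of_real (P j x) * w j))) has_sum Re (cnj c * c)) UNIV \<Longrightarrow> ?thesis"
      using e1 e2 by simp
  qed
  have rle: "Re (cnj c * E x * w j) \<le> cmod c * M" if "j < p" for j x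
  proof -
    have "Re (cnj c * E x * w j) \<le> cmod (cnj c * E x * w j)" by (rule complex_Re_le_cmod)
    also have "\<dots> = cmod c * cmod (w j)" by (simp add: norm_mult E)
    also have "\<dots> \<le> cmod c * M" using wM[OF that] by (simp add: mult_left_mono)
    finally show ?thesis .
  qed
  have tot2: "((\<lambda>x. \<Sum>j<p. P j x * (cmod c * M)) has_sum (cmod c * M)) UNIV"
    using has_sum_cmult_left[OF tot, of "cmod c * M"] by (simp add: sum_distrib_left mult_ac)
  have sq: "(cmod c)^2 \<le> cmod c * M"
    by (rule has_sum_mono[OF hr tot2]) (intro sum_mono mult_left_mono rle nn; simp)
  show "cmod c \<le> M"
  proof (cases "cmod c = 0")
    case True then show ?thesis using M0 by simp
  next
    case False
    then have "cmod c > 0" by simp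
    with sq show ?thesis by (simp add: power2_eq_square)
  qed
  assume cM: "cmod c = M" and j: "j < p" and Px: "P j x > 0"
  have hd: "((\<lambda>x. \<Sum>j<p. P j x * (M * M - Re (cnj c * E x * w j))) has_sum (M * M - (cmod c)^2)) UNIV"
  proof -
    have "((\<lambda>x. (\<Sum>j<p. P j x * (cmod c * M)) + (- (\<Sum>j<p. P j x * Re (cnj c * E x * w j)))) has_sum (cmod c * M + (- ((cmod c)^2)))) UNIV"
      by (rule has_sum_add[OF tot2 has_sum_uminusI[OF hr]])
    moreover have "\<And>(a::nat \<Rightarrow> real) K r. (\<Sum>j<p. a j * K) + (- (\<Sum>j<p. a j * r j)) = (\<Sum>j<p. a j * (K - r j))"
      by (simp add: sum_subtractf right_diff_distrib)
    moreover have "cmod c * M + (- ((cmod c)^2)) = M * M - (cmod c)^2" using cM by (simp add: power2_eq_square)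
    ultimately show ?thesis using cM by (simp only:)
  qed
  have "(\<lambda>x. \<Sum>j<p. P j x * (M * M - Re (cnj c * E x * w j))) x = 0"
    by (rule nonneg_has_sum_le_0D[OF hd]) (use cM rle nn in \<open>auto intro!: sum_nonneg simp: power2_eq_square\<close>)
  then have "P j x * (M * M - Re (cnj c * E x * w j)) = 0"
    using j by (subst (asm) sum_nonneg_eq_0_iff) (use cM rle nn in \<open>auto simp: power2_eq_square\<close>)
  with Px have reM: "Re (cnj c * E x * w j) = M * M" by simp
  define z where "z = cnj c * E x * w j"
  have "cmod z \<le> M * M" unfolding z_def using wM[OF j] cM M0 by (simp add: norm_mult E mult_left_mono)
  moreover have "Re z = M * M" using reM z_def by simp
  ultimately have "(cmod z)^2 \<le> (M * M)^2" and rz: "Re z = M * M"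
    by (auto intro: power_mono)
  then have "(Im z)^2 \<le> 0" using cmod_power2[of z] by simp
  then have "Im z = 0" by simp
  then have "z = complex_of_real (M * M)" using \<open>Re z = M * M\<close> by (simp add: complex_eq_iff)
  also have "\<dots> = cnj c * c" using cM
    by (metis complex_norm_square mult.commute power2_eq_square of_real_mult)
  finally have "cnj c * (E x * w j) = cnj c * c" by (simp add: z_def mult_ac)
  then show "E x * w j = c"
  proof (cases "c = 0")
    case True
    then have "M = 0" using cM by simp
    then have "w j = 0" using wM[OF j] by simp
    then show ?thesis using True by simp
  qed simp
qed


lemma pow_gcd_one:
  fixes z :: complex
  assumes h: "\<And>n. n \<in> S \<Longrightarrow> z ^ n = 1" and g: "Gcd S = (1::nat)"
  shows "z = 1"
proof -
  have "\<not> S \<subseteq> {0}" using g Gcd_0_iff[of S] by auto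
  then obtain n0 where n0: "n0 \<in> S" "n0 > 0" by auto
  define k where "k = (LEAST k. k > 0 \<and> z ^ k = 1)"
  have k: "k > 0 \<and> z ^ k = 1" unfolding k_def
    by (rule LeastI[of _ n0]) (use n0 h in auto)
  have "k dvd n" if "n \<in> S" for n
  proof -
    have "n = k * (n div k) + n mod k" by simp
    then have "z ^ n = z ^ (k * (n div k)) * z ^ (n mod k)"
      by (metis power_add)
    then have "z ^ n = (z ^ k) ^ (n div k) * z ^ (n mod k)"
      by (simp only: power_mult)
    then have zm: "z ^ (n mod k) = 1" using k h[OF that] by simp
    show ?thesis
    proof (rule ccontr)
      assume "\<not> k dvd n"
      then have "n mod k > 0" by (simp add: dvd_eq_mod_eq_0)
      then have P: "0 < n mod k \<and> z ^ (n mod k) = 1" using zm by simp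
      have "k \<le> n mod k" using Least_le[of "\<lambda>k. 0 < k \<and> z ^ k = 1", OF P] unfolding k_def .
      moreover have "n mod k < k" using k by simp
      ultimately show False by simp
    qed
  qed
  then have "k dvd Gcd S" by (rule Gcd_greatest)
  then have "k = 1" using g by simp
  then show ?thesis using k by simp
qed

lemma dot_add: "int_real_dot (a + b) \<theta> = int_real_dot a \<theta> + int_real_dot b \<theta>"
  unfolding int_real_dot_def by (simp add: distrib_right sum.distrib)

lemma dot_zero: "int_real_dot 0 \<theta> = 0"
  unfolding int_real_dot_def by simp

lemma pow_nonneg:
  fixes mu :: "nat \<Rightarrow> nat \<Rightarrow> int^'d \<Rightarrow> real"
  assumes "markov_additive p mu" "t \<in> state_space p"
  shows "mak_trans_pow p mu n s t \<ge> 0"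
  using assms(2)
proof (induction n arbitrary: t)
  case 0 then show ?case by simp
next
  case (Suc n)
  have nn: "\<And>i j x. i < p \<Longrightarrow> j < p \<Longrightarrow> mu i j x \<ge> 0"
    using assms(1) unfolding markov_additive_def by blast
  have "(\<Sum>\<^sub>\<infinity>u\<in>state_space p. mak_trans_pow p mu n s u * mak_trans mu u t) \<ge> 0"
  proof (rule infsum_nonneg)
    fix u :: "(int^'d) \<times> nat" assume u: "u \<in> state_space p"
    have "mak_trans mu u t \<ge> 0" using u Suc.prems nn unfolding state_space_def mak_trans_def
      by (cases u; cases t) auto
    then show "mak_trans_pow p mu n s u * mak_trans mu u t \<ge> 0"
      using Suc.IH[OF u] by simp
  qed
  then show ?case by simp
qed

lemma pow_pos_step:
  fixes mu :: "nat \<Rightarrow> nat \<Rightarrow> int^'d \<Rightarrow> real"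
  assumes "markov_additive p mu" "t \<in> state_space p" "mak_trans_pow p mu (Suc n) s t > 0"
  shows "\<exists>u\<in>state_space p. mak_trans_pow p mu n s u > 0 \<and> mak_trans mu u t > 0"
proof (rule ccontr)
  assume neg: "\<not> ?thesis"
  have "\<forall>u\<in>state_space p. mak_trans_pow p mu n s u * mak_trans mu u t = 0"
  proof
    fix u :: "(int^'d) \<times> nat" assume u: "u \<in> state_space p"
    have a: "mak_trans_pow p mu n s u \<ge> 0" by (rule pow_nonneg[OF assms(1) u])
    have nn: "\<And>i j x. i < p \<Longrightarrow> j < p \<Longrightarrow> mu i j x \<ge> 0"
      using assms(1) unfolding markov_additive_def by blast
    have b: "mak_trans mu u t \<ge> 0" using assms(2) u nn unfolding state_space_def mak_trans_def
      by (cases u; cases t) auto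
    have "\<not> (mak_trans_pow p mu n s u > 0 \<and> mak_trans mu u t > 0)" using neg u by blast
    then show "mak_trans_pow p mu n s u * mak_trans mu u t = 0" using a b by auto
  qed
  then have "mak_trans_pow p mu (Suc n) s t = 0" by (simp add: infsum_0)
  then show False using assms(3) by simp
qed


theorem lemma2p1:
  fixes p :: nat and mu :: "nat \<Rightarrow> nat \<Rightarrow> int^'d \<Rightarrow> real" and \<theta> :: "real^'d"
  assumes "p \<ge> 1"
    and "markov_additive p mu"
    and "mak_irreducible p mu"
    and "mak_aperiodic p mu"
    and "mak_exp_moments p mu"
    and "\<forall>k. - pi \<le> \<theta> $ k \<and> \<theta> $ k \<le> pi"
    and "\<theta> \<noteq> 0"
  shows "spectral_radius (mu_hat p mu \<theta>) < 1"
proof (rule ccontr)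
  assume nlt: "\<not> spectral_radius (mu_hat p mu \<theta>) < 1"
  define A where "A = mu_hat p mu \<theta>"
  have A: "A \<in> carrier_mat p p" unfolding A_def mu_hat_def by simp
  obtain ev where ev: "ev \<in> spectrum A" "norm ev = spectral_radius A"
    using spectral_radius_mem_max(1)[OF A] assms(1) by force
  have ev1: "norm ev \<ge> 1" using nlt ev(2) unfolding A_def by simp
  obtain v where v: "v \<in> carrier_vec p" "v \<noteq> 0\<^sub>v p" "A *\<^sub>v v = ev \<cdot>\<^sub>v v"
    using ev(1) A unfolding spectrum_def eigenvalue_def eigenvector_def by auto
  have nn: "\<And>i j x. i < p \<Longrightarrow> j < p \<Longrightarrow> mu i j x \<ge> 0"
    and hs: "\<And>i. i < p \<Longrightarrow> ((\<lambda>(x,j). mu i j x) has_sum 1) (UNIV \<times> {..<p})"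
    using assms(2) unfolding markov_additive_def by auto
  have tot: "((\<lambda>x. \<Sum>j<p. mu i j x) has_sum 1) UNIV" if "i < p" for i
    by (rule has_sum_SigmaD[OF hs[OF that]]) simp
  have row: "ev * Matrix.vec_index v i = (\<Sum>j<p. (\<Sum>\<^sub>\<infinity>x. cis (int_real_dot x \<theta>) * complex_of_real (mu i j x)) * Matrix.vec_index v j)"
    if i: "i < p" for i
  proof -
    have "Matrix.vec_index (A *\<^sub>v v) i = Matrix.vec_index (ev \<cdot>\<^sub>v v) i" using v(3) by simp
    then show ?thesis using i v(1) A
      by (simp add: A_def mu_hat_def scalar_prod_def atLeast0LessThan)
  qed
  define M where "M = Max ((\<lambda>j. cmod (Matrix.vec_index v j)) ` {..<p})"
  have Mge: "cmod (Matrix.vec_index v j) \<le> M" if "j < p" for j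
    unfolding M_def using that by (intro Max_ge) auto
  obtain i0 where i0: "i0 < p" "cmod (Matrix.vec_index v i0) = M"
  proof -
    have "M \<in> (\<lambda>j. cmod (Matrix.vec_index v j)) ` {..<p}"
      unfolding M_def using assms(1) by (intro Max_in) (auto simp: lessThan_empty_iff)
    then show ?thesis using that by auto
  qed
  have "\<exists>j<p. Matrix.vec_index v j \<noteq> 0"
  proof (rule ccontr)
    assume "\<not> ?thesis"
    then have "v = 0\<^sub>v p" using v(1) by (auto intro!: eq_vecI)
    then show False using v(2) by simp
  qed
  then obtain j1 where "j1 < p" "Matrix.vec_index v j1 \<noteq> 0" by auto
  then have Mpos: "M > 0" using Mge[of j1] by (meson norm_le_zero_iff not_le order_trans)
  have cisn: "\<And>x. cmod (cis (int_real_dot x \<theta>)) = 1" by simp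
  have M0: "M \<ge> 0" using Mpos by simp
  have nni: "\<And>j x. j < p \<Longrightarrow> mu i j x \<ge> 0" if "i < p" for i using nn that by blast
  have "cmod (ev * Matrix.vec_index v i0) \<le> M"
    by (rule core(1)[OF nni[OF i0(1)] tot[OF i0(1)] cisn Mge M0 row[OF i0(1)]])
  then have "cmod ev * M \<le> 1 * M" using i0 by (simp add: norm_mult)
  then have "cmod ev \<le> 1" using Mpos by simp
  then have ev_1: "cmod ev = 1" using ev1 by simp
  have K: "cis (int_real_dot x \<theta>) * Matrix.vec_index v j = ev * Matrix.vec_index v i
           \<and> cmod (Matrix.vec_index v j) = M"
    if i: "i < p" "cmod (Matrix.vec_index v i) = M" and j: "j < p" and pos: "mu i j x > 0" for i j x
  proof -
    have e: "cis (int_real_dot x \<theta>) * Matrix.vec_index v j = ev * Matrix.vec_index v i"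
    proof -
      have cM: "cmod (ev * Matrix.vec_index v i) = M" using i ev_1 by (simp add: norm_mult)
      show ?thesis
        by (rule core(2)[OF nni[OF i(1)] tot[OF i(1)] cisn Mge M0 row[OF i(1)] cM j pos])
    qed
    then have "cmod (cis (int_real_dot x \<theta>) * Matrix.vec_index v j) = cmod (ev * Matrix.vec_index v i)" by simp
    then have "cmod (Matrix.vec_index v j) = M" using i ev_1 by (simp add: norm_mult)
    with e show ?thesis by simp
  qed
  have path: "\<forall>y j. j < p \<longrightarrow> mak_trans_pow p mu n (0, i0) (y, j) > 0 \<longrightarrow>
      cmod (Matrix.vec_index v j) = M \<and> cis (int_real_dot y \<theta>) * Matrix.vec_index v j = ev ^ n * Matrix.vec_index v i0" for n
  proof (induction n)
    case 0
    then show ?case using i0 by (auto simp: dot_zero split: if_splits)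
  next
    case (Suc n)
    show ?case
    proof (intro allI impI)
      fix y j assume j: "j < p" and pos: "mak_trans_pow p mu (Suc n) (0, i0) (y, j) > 0"
      have "(y, j) \<in> state_space p" using j by (simp add: state_space_def)
      from pow_pos_step[OF assms(2) this pos] obtain u where
        u: "u \<in> state_space p" "mak_trans_pow p mu n (0, i0) u > 0" "mak_trans mu u (y, j) > 0" by blast
      obtain z k where zk: "u = (z, k)" by (cases u)
      have k: "k < p" using u(1) zk by (simp add: state_space_def)
      have IH: "cmod (Matrix.vec_index v k) = M \<and> cis (int_real_dot z \<theta>) * Matrix.vec_index v k = ev ^ n * Matrix.vec_index v i0"
        using Suc.IH k u(2) zk by blast
      have mpos: "mu k j (y - z) > 0" using u(3) zk by (simp add: mak_trans_def)
      have KK: "cis (int_real_dot (y - z) \<theta>) * Matrix.vec_index v j = ev * Matrix.vec_index v k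
           \<and> cmod (Matrix.vec_index v j) = M"
        by (rule K[OF k IH[THEN conjunct1] j mpos])
      have "int_real_dot y \<theta> = int_real_dot z \<theta> + int_real_dot (y - z) \<theta>"
        using dot_add[of z "y - z" \<theta>] by simp
      then have "cis (int_real_dot y \<theta>) * Matrix.vec_index v j
          = cis (int_real_dot z \<theta>) * (cis (int_real_dot (y - z) \<theta>) * Matrix.vec_index v j)"
        by (simp add: cis_mult[symmetric] mult_ac)
      also have "\<dots> = ev * (cis (int_real_dot z \<theta>) * Matrix.vec_index v k)" using KK by (simp add: mult_ac)
      also have "\<dots> = ev ^ Suc n * Matrix.vec_index v i0" using IH by simp
      finally show "cmod (Matrix.vec_index v j) = M \<and> cis (int_real_dot y \<theta>) * Matrix.vec_index v j = ev ^ Suc n * Matrix.vec_index v i0"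
        using KK by simp
    qed
  qed
  have vi0: "Matrix.vec_index v i0 \<noteq> 0" using i0 Mpos by auto
  have s0: "(0, i0) \<in> state_space p" using i0 by (simp add: state_space_def)
  have "ev = 1"
  proof (rule pow_gcd_one)
    show "Gcd {n. n \<ge> 1 \<and> mak_trans_pow p mu n (0, i0) (0, i0) > 0} = 1"
      using assms(4) s0 unfolding mak_aperiodic_def by blast
    fix n assume "n \<in> {n. n \<ge> 1 \<and> mak_trans_pow p mu n (0, i0) (0, i0) > 0}"
    then have "cis (int_real_dot 0 \<theta>) * Matrix.vec_index v i0 = ev ^ n * Matrix.vec_index v i0"
      using path[of n] i0 by blast
    then show "ev ^ n = 1" using vi0 by (simp add: dot_zero)
  qed
  have th0: "\<theta> $ l = 0" for l
  proof -
    define e :: "int^'d" where "e = (\<chi> m. if m = l then 1 else 0)"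
    have de: "int_real_dot e \<theta> = \<theta> $ l"
    proof -
      have "(\<lambda>k. real_of_int (e $ k) * \<theta> $ k) = (\<lambda>k. if k = l then \<theta> $ l else 0)"
        unfolding e_def by auto
      then show ?thesis unfolding int_real_dot_def by (simp only:) simp
    qed
    have "(e, i0) \<in> state_space p" using i0 by (simp add: state_space_def)
    then obtain n where "mak_trans_pow p mu n (0, i0) (e, i0) > 0"
      using assms(3) s0 unfolding mak_irreducible_def by blast
    then have "cis (int_real_dot e \<theta>) * Matrix.vec_index v i0 = ev ^ n * Matrix.vec_index v i0"
      using path[of n] i0 by blast
    then have "cis (\<theta> $ l) = 1" using vi0 \<open>ev = 1\<close> de by simp
    then have "Re (cis (\<theta> $ l)) = 1" by simp
    then have "cos (\<theta> $ l) = 1" by simp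
    then obtain m :: int where m: "\<theta> $ l = real_of_int m * 2 * pi" using cos_one_2pi_int by blast
    have "\<bar>real_of_int m * 2 * pi\<bar> \<le> pi" using assms(6) m by (metis abs_le_iff minus_le_iff)
    then have "\<bar>real_of_int m\<bar> * 2 \<le> 1" by (simp add: abs_mult)
    then have "m = 0" by linarith
    then show ?thesis using m by simp
  qed
  then have "\<theta> = 0" by (simp add: Finite_Cartesian_Product.vec_eq_iff)
  then show False using assms(7) by simp
qed

end
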